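(* Let $k>0$ and $\mu<0$ be constants, and let $m_1,m_2$ be locally Lipschitz functions on an interval $[0,\tau)$ with $m_1\le m_2$, $m_2(0)\ge 0$, satisfying for a.e. $t\in(0,\tau)$ \[ m_1'(t)\le \mu m_1(t)^2+k\,(m_2(t)-m_1(t)),\qquad m_2'(t)\le \mu m_2(t)^2+k\,(m_2(t)-m_1(t)). \] If $m_1(0)\le \frac{2k}{\mu}-m_2(0)$, then $m(t):=m_1(t)-\frac{k}{\mu}$ satisfies $m(0)<0$ and \[ m(t)\le \frac{m(0)}{1-m(0)\mu t} \] for all $t\in[0,\tau)$ with $t<\frac{1}{m(0)\mu}$; in particular $m(t)\to-\infty$ as $t\to\frac{1}{m(0)\mu}$ (so that $\tau\le \frac{1}{m(0)\mu}$ if $m_1$ stays finite on $[0,\tau)$).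
   Context: In the paper $m_1(t)=\inf_x u_x(t,x)$, $m_2(t)=\sup_x u_x(t,x)$ and $k=K(0)$; the lemma is stated here as a self-contained statement about the differential inequalities. *)

theory Defs
  imports "HOL-Analysis.Analysis"
begin

definition locally_lipschitz_on :: "real set \<Rightarrow> (real \<Rightarrow> real) \<Rightarrow> bool" where
  "locally_lipschitz_on I f \<longleftrightarrow>
     (\<forall>x\<in>I. \<exists>e>0. \<exists>L. L-lipschitz_on (cball x e \<inter> I) f)"

end

theory Submission
  imports Defs
begin

definition plip :: "real set \<Rightarrow> (real \<Rightarrow> real) \<Rightarrow> bool" where
  "plip S g \<longleftrightarrow> (\<forall>x\<in>S. \<exists>e>0. \<exists>B. \<forall>y\<in>S. \<bar>y - x\<bar> < e \<longrightarrow> \<bar>g y - g x\<bar> \<le> B * \<bar>y - x\<bar>)"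

lemma absB: "(a::real) \<le> B * t \<Longrightarrow> 0 \<le> t \<Longrightarrow> a \<le> \<bar>B\<bar> * t"
  by (metis abs_ge_self mult_right_mono order_trans)

lemma plip_subset: "plip S g \<Longrightarrow> T \<subseteq> S \<Longrightarrow> plip T g"
  unfolding plip_def by (meson subsetD)

lemma plip_llip: "locally_lipschitz_on I f \<Longrightarrow> plip I f"
  unfolding plip_def locally_lipschitz_on_def
proof (intro ballI)
  fix x assume a: "\<forall>x\<in>I. \<exists>e>0. \<exists>L. L-lipschitz_on (cball x e \<inter> I) f" and x: "x \<in> I"
  then obtain e L where e: "e > 0" and L: "L-lipschitz_on (cball x e \<inter> I) f" by blast
  have "\<forall>y\<in>I. \<bar>y - x\<bar> < e \<longrightarrow> \<bar>f y - f x\<bar> \<le> L * \<bar>y - x\<bar>"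
  proof (intro ballI impI)
    fix y assume "y \<in> I" "\<bar>y - x\<bar> < e"
    then have "y \<in> cball x e \<inter> I" "x \<in> cball x e \<inter> I" using x e by (auto simp: dist_real_def)
    from lipschitz_onD[OF L this] show "\<bar>f y - f x\<bar> \<le> L * \<bar>y - x\<bar>" by (simp add: dist_real_def)
  qed
  then show "\<exists>e>0. \<exists>B. \<forall>y\<in>I. \<bar>y - x\<bar> < e \<longrightarrow> \<bar>f y - f x\<bar> \<le> B * \<bar>y - x\<bar>" using e by blast
qed

lemma deriv_loclip:
  fixes h :: "real \<Rightarrow> real"
  assumes "DERIV h x :> D"
  shows "\<exists>e>0. \<forall>y. \<bar>y - x\<bar> < e \<longrightarrow> \<bar>h y - h x\<bar> \<le> (\<bar>D\<bar> + 1) * \<bar>y - x\<bar>"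
proof -
  have "((\<lambda>y. (h y - h x) / (y - x)) \<longlongrightarrow> D) (at x)"
    using assms by (simp add: has_field_derivative_iff)
  then have "eventually (\<lambda>y. dist ((h y - h x) / (y - x)) D < 1) (at x)"
    by (rule tendstoD) simp
  then obtain d where d: "d > 0" and hd: "\<And>y. y \<noteq> x \<Longrightarrow> dist y x < d \<Longrightarrow> dist ((h y - h x) / (y - x)) D < 1"
    unfolding eventually_at by blast
  have "\<bar>h y - h x\<bar> \<le> (\<bar>D\<bar> + 1) * \<bar>y - x\<bar>" if "\<bar>y - x\<bar> < d" for y :: real
  proof (cases "y = x")
    case False
    then have "\<bar>(h y - h x) / (y - x) - D\<bar> < 1" using hd[of y] that by (simp add: dist_real_def)
    then have q: "\<bar>(h y - h x) / (y - x)\<bar> \<le> \<bar>D\<bar> + 1" by linarith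
    have eq: "\<bar>h y - h x\<bar> = \<bar>(h y - h x) / (y - x)\<bar> * \<bar>y - x\<bar>" using False by (simp add: abs_divide)
    show ?thesis unfolding eq by (rule mult_right_mono[OF q]) simp
  qed simp
  then show ?thesis using d by blast
qed

lemma plip_deriv: "(\<And>x. x \<in> S \<Longrightarrow> \<exists>D. DERIV h x :> D) \<Longrightarrow> plip S h"
  unfolding plip_def by (meson deriv_loclip)

lemma plip_add: "plip S u \<Longrightarrow> plip S v \<Longrightarrow> plip S (\<lambda>x. u x + v x)"
  unfolding plip_def
proof (intro ballI)
  fix x assume u: "\<forall>x\<in>S. \<exists>e>0. \<exists>B. \<forall>y\<in>S. \<bar>y - x\<bar> < e \<longrightarrow> \<bar>u y - u x\<bar> \<le> B * \<bar>y - x\<bar>"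
    and v: "\<forall>x\<in>S. \<exists>e>0. \<exists>B. \<forall>y\<in>S. \<bar>y - x\<bar> < e \<longrightarrow> \<bar>v y - v x\<bar> \<le> B * \<bar>y - x\<bar>" and x: "x \<in> S"
  obtain e1 B1 where e1: "e1 > 0" "\<forall>y\<in>S. \<bar>y - x\<bar> < e1 \<longrightarrow> \<bar>u y - u x\<bar> \<le> B1 * \<bar>y - x\<bar>" using u x by blast
  obtain e2 B2 where e2: "e2 > 0" "\<forall>y\<in>S. \<bar>y - x\<bar> < e2 \<longrightarrow> \<bar>v y - v x\<bar> \<le> B2 * \<bar>y - x\<bar>" using v x by blast
  have mpos: "min e1 e2 > 0" using e1 e2 by simp
  have H: "\<forall>y\<in>S. \<bar>y - x\<bar> < min e1 e2 \<longrightarrow> \<bar>(u y + v y) - (u x + v x)\<bar> \<le> (B1 + B2) * \<bar>y - x\<bar>"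
  proof (intro ballI impI)
    fix y assume "y \<in> S" "\<bar>y - x\<bar> < min e1 e2"
    then have "\<bar>u y - u x\<bar> \<le> B1 * \<bar>y - x\<bar>" "\<bar>v y - v x\<bar> \<le> B2 * \<bar>y - x\<bar>" using e1 e2 by auto
    moreover have "\<bar>(u y + v y) - (u x + v x)\<bar> \<le> \<bar>u y - u x\<bar> + \<bar>v y - v x\<bar>" by linarith
    ultimately show "\<bar>(u y + v y) - (u x + v x)\<bar> \<le> (B1 + B2) * \<bar>y - x\<bar>" by (simp add: distrib_right)
  qed
  show "\<exists>e>0. \<exists>B. \<forall>y\<in>S. \<bar>y - x\<bar> < e \<longrightarrow> \<bar>(u y + v y) - (u x + v x)\<bar> \<le> B * \<bar>y - x\<bar>"
    using mpos H by blast
qed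

lemma plip_mult: "plip S u \<Longrightarrow> plip S v \<Longrightarrow> plip S (\<lambda>x. u x * v x)"
  unfolding plip_def
proof (intro ballI)
  fix x assume u: "\<forall>x\<in>S. \<exists>e>0. \<exists>B. \<forall>y\<in>S. \<bar>y - x\<bar> < e \<longrightarrow> \<bar>u y - u x\<bar> \<le> B * \<bar>y - x\<bar>"
    and v: "\<forall>x\<in>S. \<exists>e>0. \<exists>B. \<forall>y\<in>S. \<bar>y - x\<bar> < e \<longrightarrow> \<bar>v y - v x\<bar> \<le> B * \<bar>y - x\<bar>" and x: "x \<in> S"
  obtain e1 B1 where e1: "e1 > 0" "\<forall>y\<in>S. \<bar>y - x\<bar> < e1 \<longrightarrow> \<bar>u y - u x\<bar> \<le> B1 * \<bar>y - x\<bar>" using u x by blast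
  obtain e2 B2 where e2: "e2 > 0" "\<forall>y\<in>S. \<bar>y - x\<bar> < e2 \<longrightarrow> \<bar>v y - v x\<bar> \<le> B2 * \<bar>y - x\<bar>" using v x by blast
  define B where "B = (\<bar>u x\<bar> + \<bar>B1\<bar>) * \<bar>B2\<bar> + \<bar>v x\<bar> * \<bar>B1\<bar>"
  have mpos: "min 1 (min e1 e2) > 0" using e1 e2 by simp
  have H: "\<forall>y\<in>S. \<bar>y - x\<bar> < min 1 (min e1 e2) \<longrightarrow> \<bar>u y * v y - u x * v x\<bar> \<le> B * \<bar>y - x\<bar>"
  proof (intro ballI impI)
    fix y assume "y \<in> S" "\<bar>y - x\<bar> < min 1 (min e1 e2)"
    then have h1: "\<bar>u y - u x\<bar> \<le> \<bar>B1\<bar> * \<bar>y - x\<bar>" and h2: "\<bar>v y - v x\<bar> \<le> \<bar>B2\<bar> * \<bar>y - x\<bar>" and h3: "\<bar>y - x\<bar> < 1"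
      using e1 e2 by (auto intro!: absB)
    have "\<bar>B1\<bar> * \<bar>y - x\<bar> \<le> \<bar>B1\<bar>" using h3 by (simp add: mult_left_le)
    then have uy: "\<bar>u y\<bar> \<le> \<bar>u x\<bar> + \<bar>B1\<bar>" using h1 by linarith
    have eq: "u y * v y - u x * v x = u y * (v y - v x) + v x * (u y - u x)" by (simp add: algebra_simps)
    have p1: "\<bar>u y * (v y - v x)\<bar> \<le> (\<bar>u x\<bar> + \<bar>B1\<bar>) * (\<bar>B2\<bar> * \<bar>y - x\<bar>)"
      unfolding abs_mult by (rule mult_mono[OF uy h2]) auto
    have p2: "\<bar>v x * (u y - u x)\<bar> \<le> \<bar>v x\<bar> * (\<bar>B1\<bar> * \<bar>y - x\<bar>)"
      unfolding abs_mult by (rule mult_left_mono[OF h1]) auto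
    show "\<bar>u y * v y - u x * v x\<bar> \<le> B * \<bar>y - x\<bar>"
    proof -
      have "\<bar>u y * v y - u x * v x\<bar> \<le> \<bar>u y * (v y - v x)\<bar> + \<bar>v x * (u y - u x)\<bar>"
        unfolding eq by (rule abs_triangle_ineq)
      also have "\<dots> \<le> (\<bar>u x\<bar> + \<bar>B1\<bar>) * (\<bar>B2\<bar> * \<bar>y - x\<bar>) + \<bar>v x\<bar> * (\<bar>B1\<bar> * \<bar>y - x\<bar>)"
        using p1 p2 by linarith
      also have "\<dots> = B * \<bar>y - x\<bar>" unfolding B_def by (simp add: algebra_simps)
      finally show ?thesis .
    qed
  qed
  show "\<exists>e>0. \<exists>B. \<forall>y\<in>S. \<bar>y - x\<bar> < e \<longrightarrow> \<bar>u y * v y - u x * v x\<bar> \<le> B * \<bar>y - x\<bar>"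
    using mpos H by blast
qed

lemma plip_inverse:
  assumes "plip S u" "\<delta> > 0" "\<And>y. y \<in> S \<Longrightarrow> u y \<le> - \<delta>"
  shows "plip S (\<lambda>x. 1 / u x)"
  unfolding plip_def
proof (intro ballI)
  fix x assume x: "x \<in> S"
  obtain e1 B1 where e1: "e1 > 0" "\<forall>y\<in>S. \<bar>y - x\<bar> < e1 \<longrightarrow> \<bar>u y - u x\<bar> \<le> B1 * \<bar>y - x\<bar>" using assms(1) x unfolding plip_def by blast
  have "\<forall>y\<in>S. \<bar>y - x\<bar> < e1 \<longrightarrow> \<bar>1 / u y - 1 / u x\<bar> \<le> (\<bar>B1\<bar> / \<delta>^2) * \<bar>y - x\<bar>"
  proof (intro ballI impI)
    fix y assume y: "y \<in> S" "\<bar>y - x\<bar> < e1"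
    then have h1: "\<bar>u y - u x\<bar> \<le> \<bar>B1\<bar> * \<bar>y - x\<bar>" using e1 by (auto intro!: absB)
    have uy: "u y \<le> -\<delta>" and ux: "u x \<le> -\<delta>" using assms(3) x y by auto
    have ne: "u y \<noteq> 0" "u x \<noteq> 0" using uy ux assms(2) by auto
    have "\<bar>1 / u y - 1 / u x\<bar> = \<bar>u x - u y\<bar> / (\<bar>u y\<bar> * \<bar>u x\<bar>)"
      using ne by (simp add: field_simps abs_divide abs_mult)
    also have "\<dots> \<le> \<bar>u x - u y\<bar> / \<delta>^2"
    proof (rule divide_left_mono)
      have "\<delta> * \<delta> \<le> \<bar>u y\<bar> * \<bar>u x\<bar>" using uy ux assms(2) by (intro mult_mono) auto
      then show "\<delta>^2 \<le> \<bar>u y\<bar> * \<bar>u x\<bar>" by (simp add: power2_eq_square)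
    qed (use assms(2) ne in auto)
    also have "\<dots> \<le> (\<bar>B1\<bar> * \<bar>y - x\<bar>) / \<delta>^2"
      using h1 by (intro divide_right_mono) (auto simp: abs_minus_commute)
    finally show "\<bar>1 / u y - 1 / u x\<bar> \<le> (\<bar>B1\<bar> / \<delta>^2) * \<bar>y - x\<bar>" by simp
  qed
  then show "\<exists>e>0. \<exists>B. \<forall>y\<in>S. \<bar>y - x\<bar> < e \<longrightarrow> \<bar>1 / u y - 1 / u x\<bar> \<le> B * \<bar>y - x\<bar>" using e1 by blast
qed

lemma plip_cont: "plip S g \<Longrightarrow> continuous_on S g"
  unfolding continuous_on_iff
proof (intro ballI allI impI)
  fix x e assume p: "plip S g" and x: "x \<in> S" and e: "(0::real) < e"
  obtain e1 B1 where e1: "e1 > 0" "\<forall>y\<in>S. \<bar>y - x\<bar> < e1 \<longrightarrow> \<bar>g y - g x\<bar> \<le> B1 * \<bar>y - x\<bar>" using p x unfolding plip_def by blast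
  define d where "d = min e1 (e / (\<bar>B1\<bar> + 1))"
  have d: "d > 0" using e1 e by (simp add: d_def)
  have "\<forall>y\<in>S. dist y x < d \<longrightarrow> dist (g y) (g x) < e"
  proof (intro ballI impI)
    fix y assume y: "y \<in> S" "dist y x < d"
    then have h: "\<bar>g y - g x\<bar> \<le> \<bar>B1\<bar> * \<bar>y - x\<bar>" using e1 by (auto simp: d_def dist_real_def intro!: absB)
    have "\<bar>y - x\<bar> < e / (\<bar>B1\<bar> + 1)" using y by (simp add: d_def dist_real_def)
    then have "(\<bar>B1\<bar> + 1) * \<bar>y - x\<bar> < e" by (simp add: field_simps)
    moreover have "\<bar>B1\<bar> * \<bar>y - x\<bar> \<le> (\<bar>B1\<bar> + 1) * \<bar>y - x\<bar>" by (simp add: mult_right_mono)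
    ultimately show "dist (g y) (g x) < e" using h by (simp add: dist_real_def)
  qed
  then show "\<exists>d>0. \<forall>x'\<in>S. dist x' x < d \<longrightarrow> dist (g x') (g x) < e" using d by blast
qed

lemma plip_negl: "plip S g \<Longrightarrow> negligible S \<Longrightarrow> negligible (g ` S)"
  apply (rule negligible_locally_Lipschitz_image)
    apply simp
   apply assumption
  unfolding plip_def
proof -
  fix x assume "\<forall>x\<in>S. \<exists>e>0. \<exists>B. \<forall>y\<in>S. \<bar>y - x\<bar> < e \<longrightarrow> \<bar>g y - g x\<bar> \<le> B * \<bar>y - x\<bar>" "x \<in> S"
  then obtain e B where "e > 0" "\<forall>y\<in>S. \<bar>y - x\<bar> < e \<longrightarrow> \<bar>g y - g x\<bar> \<le> B * \<bar>y - x\<bar>" by blast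
  then show "\<exists>T B. open T \<and> x \<in> T \<and> (\<forall>y\<in>S \<inter> T. norm (g y - g x) \<le> B * norm (y - x))"
    by (intro exI[of _ "ball x e"] exI[of _ B]) (auto simp: dist_real_def abs_minus_commute)
qed


lemma core:
  fixes g :: "real \<Rightarrow> real"
  assumes ab: "a \<le> b" and cont: "continuous_on {a..b} g" and negN: "negligible N" and pl: "plip N g"
    and ga: "g a \<le> 0"
    and der: "\<And>x. a < x \<Longrightarrow> x < b \<Longrightarrow> x \<notin> N \<Longrightarrow> g x > 0 \<Longrightarrow> \<exists>D. DERIV g x :> D \<and> D < 0"
  shows "g b \<le> 0"
proof (rule ccontr)
  assume "\<not> g b \<le> 0"
  then have gb: "g b > 0" by simp
  have ngN: "negligible (g ` N)" using plip_negl[OF pl negN] .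
  have "\<not> negligible {0<..<g b}" using gb by (intro open_not_negligible) auto
  then have "\<not> {0<..<g b} \<subseteq> g ` N" using ngN negligible_subset by blast
  then obtain y where y: "0 < y" "y < g b" "y \<notin> g ` N" by (meson greaterThanLessThan_iff subsetI)
  define S where "S = {a..b} \<inter> g -` {y}"
  have Sne: "S \<noteq> {}"
    using IVT'[of g a y b] ga y ab cont by (auto simp: S_def)
  have Scl: "closed S" unfolding S_def by (rule continuous_closed_preimage[OF cont]) auto
  have Sbd: "bdd_above S" unfolding S_def by (rule bdd_above_Int1) simp
  define c where "c = Sup S"
  have cS: "c \<in> S" unfolding c_def by (rule closed_contains_Sup[OF Sne Sbd Scl])
  then have gc: "g c = y" and cab: "a \<le> c" "c \<le> b" by (auto simp: S_def)
  have "c \<noteq> a" using gc ga y by auto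
  moreover have "c \<noteq> b" using gc y by auto
  ultimately have ac: "a < c" "c < b" using cab by auto
  have cN: "c \<notin> N" using gc y(3) by auto
  obtain D where D: "DERIV g c :> D" "D < 0" using der[OF ac cN] gc y by auto
  obtain d where d: "d > 0" "\<And>h. h > 0 \<Longrightarrow> h < d \<Longrightarrow> g c > g (c + h)"
    using DERIV_neg_dec_right[OF D] by blast
  define x where "x = c + min (d/2) ((b - c)/2)"
  have m1: "min (d/2) ((b - c)/2) > 0" using d(1) ac by simp
  have m2: "min (d/2) ((b - c)/2) < b - c" using ac by (intro le_less_trans[OF min.cobounded2]) simp
  have x: "c < x" "x < b" "x > a" using m1 m2 ac unfolding x_def by linarith+
  have gx: "g x < y" using d(2)[of "min (d/2) ((b - c)/2)"] d(1) ac gc by (auto simp: x_def)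
  have "continuous_on {x..b} g" using x by (intro continuous_on_subset[OF cont]) auto
  then obtain z where z: "x \<le> z" "z \<le> b" "g z = y"
    using IVT'[of g x y b] gx y x by auto
  then have "z \<in> S" using x by (auto simp: S_def)
  then have "z \<le> c" unfolding c_def using Sbd by (rule cSup_upper)
  then show False using z x by auto
qed


lemma inv_bound: assumes "(u::real) < 0" "KK > 0" "0 < z" "z \<le> 1/(-u*KK)" shows "1/(u*z) \<le> -KK"
proof -
  define P where "P = -u*KK"
  have p: "P > 0" using assms by (simp add: mult_neg_pos P_def)
  have "z * P \<le> 1" using assms(4) pos_le_divide_eq[OF p, of z 1] by (simp add: P_def)
  then have "KK * (-u*z) \<le> 1" by (simp add: algebra_simps P_def)
  moreover have q: "-u*z > 0" using assms by (simp add: mult_neg_pos)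
  ultimately have "KK \<le> 1/(-u*z)" using pos_le_divide_eq[OF q, of KK 1] by simp
  moreover have "1/(u*z) = - (1/(-u*z))" by simp
  ultimately show ?thesis by linarith
qed

lemma recip: "(m::real) < 0 \<Longrightarrow> q < 0 \<Longrightarrow> q \<le> 1/m \<Longrightarrow> m \<le> 1/q"
  by (simp add: mult.commute neg_le_divide_eq)

lemma recip2:
  assumes "(m0::real) < 0" "\<mu> < 0" "t < 1/(m0*\<mu>)" "0 \<le> t"
  shows "(1 - m0*\<mu>*t)/m0 < 0 \<and> 1/m0 - \<mu>*t = (1 - m0*\<mu>*t)/m0 \<and> m0 / (1 - m0*\<mu>*t) = 1/((1 - m0*\<mu>*t)/m0)"
proof -
  have P: "m0*\<mu> > 0" using assms by (simp add: mult_neg_neg)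
  have "t * (m0*\<mu>) < 1" using assms(3) pos_less_divide_eq[OF P, of t 1] by simp
  then have A: "1 - m0*\<mu>*t > 0" by (simp add: algebra_simps)
  have "(1 - m0*\<mu>*t)/m0 < 0" using A assms(1) by (simp add: divide_pos_neg)
  moreover have "1/m0 - \<mu>*t = (1 - m0*\<mu>*t)/m0" using assms(1) by (simp add: field_simps)
  moreover have "m0 / (1 - m0*\<mu>*t) = 1/((1 - m0*\<mu>*t)/m0)" by simp
  ultimately show ?thesis by blast
qed

theorem lemma4p2:
  fixes k \<mu> :: real and \<tau> :: ereal and m1 m2 :: "real \<Rightarrow> real"
  assumes k_pos: "k > 0" and mu_neg: "\<mu> < 0" and tau_pos: "\<tau> > 0"
    and lip1: "locally_lipschitz_on {t. 0 \<le> t \<and> ereal t < \<tau>} m1"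
    and lip2: "locally_lipschitz_on {t. 0 \<le> t \<and> ereal t < \<tau>} m2"
    and le: "\<forall>t. 0 \<le> t \<and> ereal t < \<tau> \<longrightarrow> m1 t \<le> m2 t"
    and m20: "m2 0 \<ge> 0"
    and ode1: "AE t in lebesgue. 0 < t \<and> ereal t < \<tau> \<longrightarrow>
                 (\<exists>D. (m1 has_real_derivative D) (at t) \<and>
                      D \<le> \<mu> * (m1 t)\<^sup>2 + k * (m2 t - m1 t))"
    and ode2: "AE t in lebesgue. 0 < t \<and> ereal t < \<tau> \<longrightarrow>
                 (\<exists>D. (m2 has_real_derivative D) (at t) \<and>
                      D \<le> \<mu> * (m2 t)\<^sup>2 + k * (m2 t - m1 t))"
    and init: "m1 0 \<le> 2 * k / \<mu> - m2 0"
  shows "let m = (\<lambda>t. m1 t - k / \<mu>); T = 1 / (m 0 * \<mu>) in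
           m 0 < 0 \<and>
           (\<forall>t. 0 \<le> t \<and> ereal t < \<tau> \<and> t < T \<longrightarrow> m t \<le> m 0 / (1 - m 0 * \<mu> * t)) \<and>
           \<tau> \<le> ereal T \<and>
           (\<tau> = ereal T \<longrightarrow> filterlim m at_bot (at_left T))"
proof -
  define I where "I = {t. 0 \<le> t \<and> ereal t < \<tau>}"
  have I0: "0 \<in> I" using tau_pos by (simp add: I_def zero_ereal_def)
  have Isub: "s \<in> I" if "t \<in> I" "0 \<le> s" "s \<le> t" for s t
    using that by (auto simp: I_def intro: le_less_trans[of "ereal s" "ereal t"])
  have Iint: "{0..t} \<subseteq> I" if "t \<in> I" for t using Isub[OF that] by auto
  have p1: "plip I m1" using lip1 unfolding I_def by (rule plip_llip)
  have p2: "plip I m2" using lip2 unfolding I_def by (rule plip_llip)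
  have c1: "continuous_on I m1" by (rule plip_cont[OF p1])
  have c2: "continuous_on I m2" by (rule plip_cont[OF p2])
  obtain N1 where N1: "negligible N1" "{t. \<not> (0 < t \<and> ereal t < \<tau> \<longrightarrow>
                 (\<exists>D. (m1 has_real_derivative D) (at t) \<and>
                      D \<le> \<mu> * (m1 t)\<^sup>2 + k * (m2 t - m1 t)))} \<subseteq> N1"
    using ode1 unfolding eventually_ae_filter_negligible by blast
  obtain N2 where N2: "negligible N2" "{t. \<not> (0 < t \<and> ereal t < \<tau> \<longrightarrow>
                 (\<exists>D. (m2 has_real_derivative D) (at t) \<and>
                      D \<le> \<mu> * (m2 t)\<^sup>2 + k * (m2 t - m1 t)))} \<subseteq> N2"
    using ode2 unfolding eventually_ae_filter_negligible by blast
  define N where "N = (N1 \<union> N2) \<inter> I"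
  have negN: "negligible N" unfolding N_def using N1(1) N2(1) by (intro negligible_Int) auto
  have NI: "N \<subseteq> I" by (auto simp: N_def)
  have p1N: "plip N m1" using p1 NI by (rule plip_subset)
  have p2N: "plip N m2" using p2 NI by (rule plip_subset)
  have good: "\<exists>D1 D2. DERIV m1 t :> D1 \<and> D1 \<le> \<mu> * (m1 t)\<^sup>2 + k * (m2 t - m1 t) \<and>
                    DERIV m2 t :> D2 \<and> D2 \<le> \<mu> * (m2 t)\<^sup>2 + k * (m2 t - m1 t)"
    if "t \<in> I" "0 < t" "t \<notin> N" for t
  proof -
    have "t \<notin> N1" "t \<notin> N2" using that by (auto simp: N_def)
    moreover have "ereal t < \<tau>" using that by (auto simp: I_def)
    ultimately show ?thesis using N1(2) N2(2) that(2) by blast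
  qed
  have intI: "x \<in> I" if "t1 \<in> I" "0 < x" "x < t1" for x t1
    using Isub[OF that(1)] that by auto
  define c where "c = 2 * k / \<mu>"
  have S1: "m1 t1 + m2 t1 \<le> c" if t1I: "t1 \<in> I" for t1
  proof (rule ccontr)
    assume "\<not> m1 t1 + m2 t1 \<le> c"
    then have gt: "m1 t1 + m2 t1 - c > 0" by simp
    have "t1 \<noteq> 0" using gt init by (auto simp: c_def)
    then have t1pos: "t1 > 0" using t1I by (auto simp: I_def)
    define \<epsilon> where "\<epsilon> = (m1 t1 + m2 t1 - c) * exp (-(2*k) * t1) / (2 * t1)"
    have epos: "\<epsilon> > 0" using gt t1pos by (simp add: \<epsilon>_def)
    define g where "g = (\<lambda>t. (m1 t + m2 t + (- c)) * exp (-(2*k) * t) + (- \<epsilon>) * t)"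
    have "g t1 \<le> 0"
    proof (rule core[of 0 t1 g N])
      show "0 \<le> t1" using t1pos by simp
      show "continuous_on {0..t1} g" unfolding g_def
        using continuous_on_subset[OF c1 Iint[OF t1I]] continuous_on_subset[OF c2 Iint[OF t1I]]
        by (intro continuous_intros) auto
      show "negligible N" by (rule negN)
      show "plip N g" unfolding g_def
        by (intro plip_add plip_mult p1N p2N plip_deriv) (auto intro!: derivative_eq_intros)
      show "g 0 \<le> 0" using init by (simp add: g_def c_def)
    next
      fix x assume x: "0 < x" "x < t1" "x \<notin> N" "0 < g x"
      have xI: "x \<in> I" using intI[OF t1I x(1,2)] .
      obtain D1 D2 where D: "DERIV m1 x :> D1" "D1 \<le> \<mu> * (m1 x)\<^sup>2 + k * (m2 x - m1 x)"
        "DERIV m2 x :> D2" "D2 \<le> \<mu> * (m2 x)\<^sup>2 + k * (m2 x - m1 x)"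
        using good[OF xI x(1,3)] by blast
      have dg: "DERIV g x :> (D1 + D2) * exp (-(2*k) * x) + (m1 x + m2 x + (- c)) * (exp (-(2*k) * x) * (-(2*k))) + (- \<epsilon>)"
        unfolding g_def by (auto intro!: derivative_eq_intros D(1) D(3))
      have key: "D1 + D2 \<le> 2 * k * (m1 x + m2 x - c)"
      proof -
        have e1: "\<mu> * (m1 x - 2*k/\<mu>)\<^sup>2 = \<mu> * (m1 x)\<^sup>2 - 4*(k*m1 x) + 4*(k*k/\<mu>)"
          using mu_neg by (simp add: power2_eq_square field_simps)
        have n1: "\<mu> * (m1 x - 2*k/\<mu>)\<^sup>2 \<le> 0" using mu_neg by (simp add: mult_nonpos_nonneg)
        have n2: "\<mu> * (m2 x)\<^sup>2 \<le> 0" using mu_neg by (simp add: mult_nonpos_nonneg)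
        have r: "2 * k * (m1 x + m2 x - c) = 2*(k*m1 x) + 2*(k*m2 x) - 4*(k*k/\<mu>)"
          by (simp add: c_def algebra_simps)
        have d1: "k * (m2 x - m1 x) = k*m2 x - k*m1 x" by (simp add: algebra_simps)
        show ?thesis using D(2) D(4) e1 n1 n2 r d1 by linarith
      qed
      have ex: "exp (-(2*k) * x) > 0" by simp
      have "(D1 + D2) * exp (-(2*k) * x) \<le> 2 * k * (m1 x + m2 x - c) * exp (-(2*k) * x)"
        using key ex by (intro mult_right_mono) auto
      then have "(D1 + D2) * exp (-(2*k) * x) + (m1 x + m2 x + (- c)) * (exp (-(2*k) * x) * (-(2*k))) + (- \<epsilon>) < 0"
        using epos by (simp add: algebra_simps)
      then show "\<exists>D. DERIV g x :> D \<and> D < 0" using dg by blast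
    qed
    moreover have "g t1 = (m1 t1 + m2 t1 - c) * exp (-(2*k) * t1) / 2"
      using t1pos by (simp add: g_def \<epsilon>_def field_simps)
    moreover have "(m1 t1 + m2 t1 - c) * exp (-(2*k) * t1) > 0" using gt by simp
    ultimately show False by simp
  qed
  have S2: "m1 t1 \<le> m1 0" if t1I: "t1 \<in> I" for t1
  proof -
    define g where "g = (\<lambda>t. m1 t + (- m1 0))"
    have "g t1 \<le> 0"
    proof (rule core[of 0 t1 g N])
      show "0 \<le> t1" using t1I by (simp add: I_def)
      show "continuous_on {0..t1} g" unfolding g_def
        using continuous_on_subset[OF c1 Iint[OF t1I]] by (intro continuous_intros) auto
      show "negligible N" by (rule negN)
      show "plip N g" unfolding g_def
        by (intro plip_add p1N plip_deriv) (auto intro!: derivative_eq_intros)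
      show "g 0 \<le> 0" by (simp add: g_def)
    next
      fix x assume x: "0 < x" "x < t1" "x \<notin> N" "0 < g x"
      have xI: "x \<in> I" using intI[OF t1I x(1,2)] .
      obtain D1 where D: "DERIV m1 x :> D1" "D1 \<le> \<mu> * (m1 x)\<^sup>2 + k * (m2 x - m1 x)"
        using good[OF xI x(1,3)] by blast
      have dg: "DERIV g x :> D1 + 0"
        unfolding g_def by (auto intro!: derivative_eq_intros D(1))
      have a1: "k * m2 x \<le> k * (c - m1 x)" using S1[OF xI] k_pos by (intro mult_left_mono) auto
      have e1: "\<mu> * (m1 x - k/\<mu>)\<^sup>2 = \<mu> * (m1 x)\<^sup>2 - 2*(k*m1 x) + k*k/\<mu>"
        using mu_neg by (simp add: power2_eq_square field_simps)
      have n1: "\<mu> * (m1 x - k/\<mu>)\<^sup>2 \<le> 0" using mu_neg by (simp add: mult_nonpos_nonneg)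
      have n2: "k*k/\<mu> < 0" using mu_neg k_pos by (simp add: divide_pos_neg)
      have r: "k * (c - m1 x) = 2*(k*k/\<mu>) - k*m1 x" by (simp add: c_def algebra_simps)
      have d1: "k * (m2 x - m1 x) = k*m2 x - k*m1 x" by (simp add: algebra_simps)
      have "D1 < 0" using D(2) a1 e1 n1 n2 r d1 by linarith
      then show "\<exists>D. DERIV g x :> D \<and> D < 0" using dg by auto
    qed
    then show ?thesis by (simp add: g_def)
  qed
  define m0 where "m0 = m1 0 - k / \<mu>"
  have kmu: "k / \<mu> < 0" using divide_pos_neg[OF k_pos mu_neg] .
  have twok: "2 * k / \<mu> = k/\<mu> + k/\<mu>" by (simp add: add_divide_distrib[symmetric])
  have m0neg: "m0 < 0" using init m20 kmu twok unfolding m0_def by linarith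
  have S3: "1/m0 - \<mu> * t1 - 1 / (m1 t1 - k/\<mu>) \<le> 0" if t1I: "t1 \<in> I" for t1
  proof -
    have mneg: "m1 t + (- (k/\<mu>)) \<le> - (-m0)" if "t \<in> I" for t using S2[OF that] by (simp add: m0_def)
    define g where "g = (\<lambda>t. (1/m0 + (-\<mu>) * t) + (-1) * (1 / (m1 t + (- (k/\<mu>)))))"
    have "g t1 \<le> 0"
    proof (rule core[of 0 t1 g N])
      show "0 \<le> t1" using t1I by (simp add: I_def)
      show "continuous_on {0..t1} g" unfolding g_def
        using continuous_on_subset[OF c1 Iint[OF t1I]] mneg Iint[OF t1I] m0neg
        by (intro continuous_intros) force+
      show "negligible N" by (rule negN)
      show "plip N g" unfolding g_def
        using mneg NI m0neg
        by (intro plip_add plip_mult plip_inverse[where \<delta>="-m0"] p1N plip_deriv) (auto intro!: derivative_eq_intros)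
      show "g 0 \<le> 0" by (simp add: g_def m0_def)
    next
      fix x assume x: "0 < x" "x < t1" "x \<notin> N" "0 < g x"
      have xI: "x \<in> I" using intI[OF t1I x(1,2)] .
      obtain D1 where D: "DERIV m1 x :> D1" "D1 \<le> \<mu> * (m1 x)\<^sup>2 + k * (m2 x - m1 x)"
        using good[OF xI x(1,3)] by blast
      define mx where "mx = m1 x - k/\<mu>"
      have mxneg: "mx < 0" using mneg[OF xI] m0neg by (simp add: mx_def)
      have df: "DERIV (\<lambda>t. m1 t + (- (k/\<mu>))) x :> D1 + 0" by (rule DERIV_add[OF D(1) DERIV_const])
      have di: "DERIV (\<lambda>t. inverse (m1 t + (- (k/\<mu>)))) x :> - ((D1 + 0) * inverse ((m1 x + (- (k/\<mu>))) ^ Suc (Suc 0)))"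
        by (rule DERIV_inverse_fun[OF df]) (use mxneg in \<open>simp add: mx_def\<close>)
      have dl: "DERIV (\<lambda>t. 1/m0 + (-\<mu>) * t) x :> 0 + (-\<mu>) * 1"
        by (rule DERIV_add[OF DERIV_const DERIV_cmult[OF DERIV_ident]])
      have dg0: "DERIV (\<lambda>t. (1/m0 + (-\<mu>) * t) + (-1) * inverse (m1 t + (- (k/\<mu>)))) x
           :> (0 + (-\<mu>) * 1) + (-1) * (- ((D1 + 0) * inverse ((m1 x + (- (k/\<mu>))) ^ Suc (Suc 0))))"
        by (rule DERIV_add[OF dl DERIV_cmult[OF di]])
      have dg: "DERIV g x :> - \<mu> + D1 / mx\<^sup>2"
        using dg0 unfolding g_def inverse_eq_divide by (simp add: mx_def power2_eq_square)
      have e1: "\<mu> * (m1 x)\<^sup>2 + k * (m2 x - m1 x) = \<mu> * mx\<^sup>2 + k * (m1 x + m2 x - k/\<mu>)"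
        using mu_neg by (simp add: mx_def power2_eq_square field_simps)
      have "k * (m1 x + m2 x - k/\<mu>) \<le> k * (c - k/\<mu>)" using S1[OF xI] k_pos by (intro mult_left_mono) auto
      moreover have "k * (c - k/\<mu>) = k * (k/\<mu>)" by (simp add: c_def)
      moreover have "k * (k/\<mu>) < 0" using mult_pos_neg[OF k_pos kmu] .
      ultimately have "D1 < \<mu> * mx\<^sup>2" using D(2) e1 by linarith
      moreover have mx2: "mx\<^sup>2 > 0" using mxneg by simp
      ultimately have "D1 / mx\<^sup>2 < \<mu>" by (simp add: divide_less_eq)
      then have "- \<mu> + D1 / mx\<^sup>2 < 0" by simp
      then show "\<exists>D. DERIV g x :> D \<and> D < 0" using dg by blast
    qed
    then show ?thesis by (simp add: g_def)
  qed
  define m where "m = (\<lambda>t. m1 t - k/\<mu>)"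
  define T where "T = 1 / (m 0 * \<mu>)"
  have m0eq: "m 0 = m0" by (simp add: m_def m0_def)
  have P: "m0 * \<mu> > 0" using m0neg mu_neg by (simp add: mult_neg_neg)
  have Tpos: "T > 0" using P by (simp add: T_def m0eq)
  have PT: "m0 * \<mu> * T = 1" using P m0neg mu_neg by (simp add: T_def m0eq)
  have bound: "m t \<le> m 0 / (1 - m 0 * \<mu> * t)" if tI: "t \<in> I" and tT: "t < T" for t
  proof -
    have t0: "0 \<le> t" using tI by (simp add: I_def)
    have R: "(1 - m0*\<mu>*t)/m0 < 0 \<and> 1/m0 - \<mu>*t = (1 - m0*\<mu>*t)/m0 \<and> m0 / (1 - m0*\<mu>*t) = 1/((1 - m0*\<mu>*t)/m0)"
      by (rule recip2[OF m0neg mu_neg _ t0]) (use tT in \<open>simp add: T_def m0eq\<close>)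
    have mt: "m t < 0" using S2[OF tI] m0neg by (simp add: m_def m0_def)
    have R1: "(1 - m0*\<mu>*t)/m0 < 0" and R2: "1/m0 - \<mu>*t = (1 - m0*\<mu>*t)/m0"
      and R3: "m0 / (1 - m0*\<mu>*t) = 1/((1 - m0*\<mu>*t)/m0)" using R by blast+
    have "1/m0 - \<mu> * t \<le> 1 / m t" using S3[OF tI] unfolding m_def by linarith
    then have "(1 - m0*\<mu>*t)/m0 \<le> 1 / m t" using R2 by linarith
    then have "m t \<le> 1 / ((1 - m0*\<mu>*t)/m0)" using recip[OF mt R1] by blast
    then show ?thesis unfolding m0eq R3 .
  qed
  have bound2: "m t \<le> 1 / (\<mu> * (T - t))" if tI: "t \<in> I" and tT: "t < T" for t
  proof -
    have "1 - m0 * \<mu> * t = m0 * \<mu> * (T - t)" using PT by (simp add: algebra_simps)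
    then have "m0 / (1 - m0 * \<mu> * t) = 1 / (\<mu> * (T - t))" using m0neg by simp
    then show ?thesis using bound[OF tI tT] by (simp add: m0eq)
  qed
  have small: "m t \<le> -KK" if tI: "t \<in> I" and tT: "t < T" and K: "KK > 0" and d: "T - t \<le> 1/(-\<mu>*KK)" for t KK
    using bound2[OF tI tT] inv_bound[OF mu_neg K _ d] tT by linarith
  have tauT: "\<tau> \<le> ereal T"
  proof (rule ccontr)
    assume "\<not> \<tau> \<le> ereal T"
    then have TI: "T \<in> I" using Tpos by (auto simp: I_def)
    have "compact (m1 ` {0..T})"
      by (rule compact_continuous_image[OF continuous_on_subset[OF c1 Iint[OF TI]]]) simp
    then have "bounded (m1 ` {0..T})" by (rule compact_imp_bounded)
    then obtain B where B: "\<forall>y\<in>m1 ` {0..T}. \<bar>y\<bar> \<le> B" unfolding bounded_real by blast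
    define KK where "KK = B + \<bar>k/\<mu>\<bar> + 1"
    have "\<bar>m1 0\<bar> \<le> B" using B Tpos by auto
    then have B0: "B \<ge> 0" by linarith
    have Kpos: "KK > 0" using B0 unfolding KK_def by linarith
    define dd where "dd = min T (1/(-\<mu>*KK))"
    have q: "1/(-\<mu>*KK) > 0" using Kpos mu_neg by (simp add: mult_neg_pos)
    have ddpos: "dd > 0" using Tpos q unfolding dd_def by linarith
    have ddT: "dd \<le> T" "dd \<le> 1/(-\<mu>*KK)" unfolding dd_def by simp_all
    define t where "t = T - dd"
    have t0: "0 \<le> t" "t < T" using ddpos ddT unfolding t_def by linarith+
    have tI: "t \<in> I" using Isub[OF TI t0(1)] t0 by simp
    have "m t \<le> -KK" by (rule small[OF tI t0(2) Kpos]) (use ddT in \<open>simp add: t_def\<close>)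
    moreover have "\<bar>m1 t\<bar> \<le> B" using B t0 by auto
    moreover have "k/\<mu> \<le> \<bar>k/\<mu>\<bar>" by (rule abs_ge_self)
    moreover have "m t = m1 t - k/\<mu>" by (simp add: m_def)
    ultimately show False unfolding KK_def by linarith
  qed
  have lim: "filterlim m at_bot (at_left T)" if tauE: "\<tau> = ereal T"
    unfolding filterlim_at_bot
  proof
    fix Z :: real
    define KK where "KK = \<bar>Z\<bar> + 1"
    have Kpos: "KK > 0" by (simp add: KK_def)
    define dd where "dd = min T (1/(-\<mu>*KK))"
    have q: "1/(-\<mu>*KK) > 0" using Kpos mu_neg by (simp add: mult_neg_pos)
    have ddpos: "dd > 0" using Tpos q unfolding dd_def by linarith
    have ddT: "dd \<le> T" "dd \<le> 1/(-\<mu>*KK)" unfolding dd_def by simp_all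
    have "eventually (\<lambda>t. t \<in> {T - dd<..<T}) (at_left T)"
      by (rule eventually_at_left_real) (use ddpos in simp)
    then show "eventually (\<lambda>t. m t \<le> Z) (at_left T)"
    proof (rule eventually_mono)
      fix t assume t: "t \<in> {T - dd<..<T}"
      then have t1: "T - dd < t" "t < T" by auto
      have tI: "t \<in> I" using t1 ddT tauE unfolding I_def by auto
      have "T - t \<le> 1/(-\<mu>*KK)" using t1 ddT by linarith
      then have "m t \<le> -KK" using small[OF tI t1(2) Kpos] by blast
      then show "m t \<le> Z" unfolding KK_def by linarith
    qed
  qed
  have main: "m 0 < 0 \<and>
           (\<forall>t. 0 \<le> t \<and> ereal t < \<tau> \<and> t < T \<longrightarrow> m t \<le> m 0 / (1 - m 0 * \<mu> * t)) \<and>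
           \<tau> \<le> ereal T \<and>
           (\<tau> = ereal T \<longrightarrow> filterlim m at_bot (at_left T))"
    using m0neg m0eq bound tauT lim by (auto simp: I_def)
  then show ?thesis unfolding Let_def m_def T_def .
qed



end
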